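(* Let $c>0$, $f_{\text{Nyq}}>0$, $B>0$, $M\ge 1$, and let $u(t)=\sum_{i=1}^{M}s_i(t)e^{j2\pi f_i t}$ be a signal in the class $\mathcal{M}_1$ described in the context, with common known angle of arrival $\theta\neq 90^\circ$. Consider a uniform linear array of $N$ sensors with spacing $d<\frac{c}{|\cos\theta|\,f_{\text{Nyq}}}$, with delays $\tau_n=\frac{dn}{c}\cos\theta$, steering matrix $\mathbf{A}=\mathbf{A}(\boldsymbol{f})\in\mathbb{C}^{N\times M}$ with entries $A_{n,i}=e^{j2\pi f_i\tau_n}$ ($n=1,\dots,N$, $i=1,\dots,M$), and measurements $\mathbf{x}[k]=\mathbf{A}(\boldsymbol{f})\mathbf{w}[k]$, $k\in\mathbb{Z}$, where $\boldsymbol{f}=(f_1,\dots,f_M)^T$ and $\mathbf{w}[k]\in\mathbb{C}^M$. If (c1) $N>2M-\dim(\mathrm{span}(\mathbf{w}))$ and (c2) $\dim(\mathrm{span}(\mathbf{w}))\ge 1$, then the equation $\mathbf{x}[k]=\mathbf{A}(\boldsymbol{f})\mathbf{w}[k]$, $k\in\mathbb{Z}$, has a unique solution $(\boldsymbol{f},\mathbf{w})$ (with carriers in $[-f_{\text{Nyq}}/2,f_{\text{Nyq}}/2]$, distinct, and up to a common relabeling of the indices $i$).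
   Context: Class $\mathcal{M}_1$: $u(t)=\sum_{i=1}^M s_i(t)e^{j2\pi f_i t}$ is complex valued with Fourier transform supported in $\mathcal{F}=[-f_{\text{Nyq}}/2,f_{\text{Nyq}}/2]$; each $s_i$ has Fourier transform $S_i$ supported in $[-B/2,B/2]$; the carriers satisfy $\min_{i\neq j}|f_i-f_j|>B$; all transmissions arrive at the array with the same known angle $\theta\neq 90^\circ$. Sampling system: the signal received at sensor $n$ is modeled (narrowband approximation) as $u_n(t)=\sum_{i=1}^M s_i(t)e^{j2\pi f_i(t+\tau_n)}$; each sensor multiplies $u_n(t)$ by the same periodic function $p(t)$ of period $T_p=1/f_p$, filters with an ideal low-pass filter of passband $[-f_s/2,f_s/2]$ and samples at rate $f_s=1/T_s$, yielding $x_n[k]$. Then $x_n[k]=\sum_{i=1}^M e^{j2\pi f_i\tau_n}w_i[k]$, where $w_i[k]=\tilde s_i(kT_s)$ and $\tilde s_i$ is the low-pass filtered version of $s_i(t)e^{j2\pi f_i t}p(t)$; $\mathbf{x}[k]=(x_1[k],\dots,x_N[k])^T$, $\mathbf{w}[k]=(w_1[k],\dots,w_M[k])^T$. $\dim(\mathrm{span}(\mathbf{w}))$ denotes the dimension of the linear span of $\{\mathbf{w}[k]:k\in\mathbb{Z}\}\subset\mathbb{C}^M$. *)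

theory Defs
  imports "HOL-Analysis.Analysis" "HOL-Library.Function_Algebras"
begin

definition tau :: "real \<Rightarrow> real \<Rightarrow> real \<Rightarrow> nat \<Rightarrow> real" where
  "tau c d theta n = d * real n / c * cos theta"

definition steer :: "real \<Rightarrow> real \<Rightarrow> real \<Rightarrow> ('m \<Rightarrow> real) \<Rightarrow> nat \<Rightarrow> 'm \<Rightarrow> complex" where
  "steer c d theta f n i = exp (\<i> * complex_of_real (2 * pi * f i * tau c d theta n))"

definition cscale :: "complex \<Rightarrow> ('m \<Rightarrow> complex) \<Rightarrow> ('m \<Rightarrow> complex)" where
  "cscale a v = (\<lambda>i. a * v i)"

lemma vector_space_cscale: "vector_space cscale"
  by unfold_locales (auto simp: cscale_def fun_eq_iff algebra_simps)

definition span_dim :: "(int \<Rightarrow> 'm::finite \<Rightarrow> complex) \<Rightarrow> nat" where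
  "span_dim w = vector_space.dim cscale (range w)"

end

theory Submission imports Defs begin

definition zz :: "real \<Rightarrow> real \<Rightarrow> real \<Rightarrow> real \<Rightarrow> complex" where
  "zz c d theta u = exp (\<i> * complex_of_real (2 * pi * u * (d / c * cos theta)))"

lemma steer_eq: "steer c d theta g n i = zz c d theta (g i) ^ n"
proof -
  have "steer c d theta g n i = exp (of_nat n * (\<i> * complex_of_real (2 * pi * g i * (d / c * cos theta))))"
    unfolding steer_def tau_def by (simp add: algebra_simps)
  then show ?thesis unfolding zz_def by (simp only: exp_of_nat_mult)
qed

lemma cos_nz: "0 \<le> theta \<Longrightarrow> theta \<le> pi \<Longrightarrow> theta \<noteq> pi/2 \<Longrightarrow> cos theta \<noteq> 0"
  using arccos_0 arccos_unique by blast

lemma zz_inj: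
  assumes c: "c > 0" and fN: "fNyq > 0" and d: "d > 0" and cs: "cos theta \<noteq> 0"
    and db: "d < c / (\<bar>cos theta\<bar> * fNyq)"
    and u: "u \<in> {- fNyq / 2 .. fNyq / 2}" and v: "v \<in> {- fNyq / 2 .. fNyq / 2}"
    and eq: "zz c d theta u = zz c d theta v"
  shows "u = v"
proof -
  define k where "k = d / c * cos theta"
  have k0: "k \<noteq> 0" using cs c d by (simp add: k_def)
  have kb: "\<bar>k\<bar> * fNyq < 1"
  proof -
    have "d * (\<bar>cos theta\<bar> * fNyq) < c" using db cs fN by (simp add: field_simps)
    then show ?thesis using c d by (simp add: k_def abs_mult field_simps)
  qed
  have "exp (\<i> * complex_of_real (2 * pi * u * k) - \<i> * complex_of_real (2 * pi * v * k)) = 1"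
    using eq by (simp add: zz_def k_def exp_diff)
  then have "exp (\<i> * complex_of_real (2 * pi * ((u - v) * k))) = 1"
    by (simp add: algebra_simps)
  then obtain n :: int where n: "2 * pi * ((u - v) * k) = of_int (2 * n) * pi"
    by (auto simp: exp_eq_1)
  then have n': "(u - v) * k = of_int n" by simp
  have "\<bar>u - v\<bar> \<le> fNyq" using u v by auto
  then have "\<bar>(u - v) * k\<bar> < 1" using kb
    by (metis abs_ge_zero abs_mult dual_order.strict_trans2 mult.commute mult_left_mono)
  then have "n = 0" using n' by linarith
  then show ?thesis using n' k0 by simp
qed

lemma vandermonde:
  fixes Z :: "complex set"
  assumes "finite Z" "0 \<notin> Z" "card Z \<le> N"
    and "\<And>n. n \<in> {1..N} \<Longrightarrow> (\<Sum>z\<in>Z. a z * z ^ n) = 0"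
  shows "\<forall>z\<in>Z. a z = 0"
  using assms
proof (induction Z arbitrary: a N rule: finite_induct)
  case empty then show ?case by simp
next
  case (insert z0 Z)
  define b where "b z = a z * (z - z0)" for z
  have N1: "N \<ge> 1" using insert by simp
  have "\<forall>z\<in>Z. b z = 0"
  proof (rule insert.IH[of "N - 1"])
    show "0 \<notin> Z" using insert by auto
    show "card Z \<le> N - 1" using insert by auto
    fix n assume n: "n \<in> {1..N-1}"
    have e1: "a z0 * z0 ^ n + (\<Sum>z\<in>Z. a z * z ^ n) = 0"
      using insert.prems(3)[of n] n insert.hyps by auto
    have e2: "a z0 * z0 ^ Suc n + (\<Sum>z\<in>Z. a z * z ^ Suc n) = 0"
      using insert.prems(3)[of "Suc n"] n insert.hyps by auto
    have "(\<Sum>z\<in>Z. b z * z ^ n) = (\<Sum>z\<in>Z. a z * z ^ Suc n) - z0 * (\<Sum>z\<in>Z. a z * z ^ n)"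
      by (simp add: b_def sum_distrib_left sum_subtractf[symmetric] algebra_simps)
    also have "\<dots> = 0" using e1 e2
      by (simp add: algebra_simps eq_neg_iff_add_eq_0[symmetric] )
    finally show "(\<Sum>z\<in>Z. b z * z ^ n) = 0" .
  qed
  then have Z0: "\<forall>z\<in>Z. a z = 0" using insert.hyps by (auto simp: b_def)
  have "a z0 * z0 ^ 1 + (\<Sum>z\<in>Z. a z * z ^ 1) = 0"
    using insert.prems(3)[of 1] N1 insert.hyps by auto
  then have "a z0 = 0" using Z0 insert.prems by auto
  then show ?case using Z0 by auto
qed

lemma vandermonde_inj:
  fixes z :: "real \<Rightarrow> complex"
  assumes E: "finite E" "card E \<le> N" and inj: "inj_on z E" and nz: "\<And>u. z u \<noteq> 0"
    and s: "\<And>n. n \<in> {1..N} \<Longrightarrow> (\<Sum>u\<in>E. a u * z u ^ n) = 0"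
  shows "\<forall>u\<in>E. a u = 0"
proof -
  define b where "b = a \<circ> the_inv_into E z"
  have "\<forall>v\<in>z ` E. b v = 0"
  proof (rule vandermonde[of _ N])
    show "finite (z ` E)" using E by simp
    show "0 \<notin> z ` E" using nz by auto
    show "card (z ` E) \<le> N" using E card_image_le le_trans by blast
    fix n assume n: "n \<in> {1..N}"
    have "(\<Sum>v\<in>z ` E. b v * v ^ n) = (\<Sum>u\<in>E. b (z u) * z u ^ n)"
      by (simp add: sum.reindex[OF inj])
    also have "\<dots> = (\<Sum>u\<in>E. a u * z u ^ n)"
      by (rule sum.cong) (auto simp: b_def the_inv_into_f_f[OF inj])
    finally show "(\<Sum>v\<in>z ` E. b v * v ^ n) = 0" using s[OF n] by simp
  qed
  then show ?thesis by (auto simp: b_def the_inv_into_f_f[OF inj])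
qed

lemma sum_fun_apply: "(\<Sum>k\<in>K. g k) x = (\<Sum>k\<in>K. g k x)"
  by (induction K rule: infinite_finite_induct) auto

lemma in_span_units:
  fixes v :: "'a::finite \<Rightarrow> complex"
  assumes "\<And>x. x \<notin> C \<Longrightarrow> v x = 0"
  shows "v \<in> module.span cscale ((\<lambda>c. (\<lambda>x. if x = c then 1 else 0)) ` C)"
proof -
  interpret cs: vector_space "cscale :: complex \<Rightarrow> ('a \<Rightarrow> complex) \<Rightarrow> _" by (rule vector_space_cscale)
  have "v = (\<Sum>c\<in>C. cscale (v c) (\<lambda>x. if x = c then 1 else 0))"
  proof
    fix x
    show "v x = (\<Sum>c\<in>C. cscale (v c) (\<lambda>x. if x = c then 1 else 0)) x"
      unfolding sum_fun_apply cscale_def using assms[of x]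
      by (cases "x \<in> C") (auto simp: if_distrib cong: if_cong)
  qed
  also have "\<dots> \<in> cs.span ((\<lambda>c. (\<lambda>x. if x = c then 1 else 0)) ` C)"
    by (intro cs.span_sum cs.span_scale cs.span_base) auto
  finally show ?thesis .
qed

definition aa :: "('m \<Rightarrow> real) \<Rightarrow> ('m \<Rightarrow> real) \<Rightarrow> ('m \<Rightarrow> complex) \<Rightarrow> ('m \<Rightarrow> complex) \<Rightarrow> real \<Rightarrow> complex" where
  "aa f f' y1 y2 u = (if u \<in> range f then y1 (inv f u) else 0) - (if u \<in> range f' then y2 (inv f' u) else 0)"

lemma group_one:
  fixes f :: "'m::finite \<Rightarrow> real" and g :: "real \<Rightarrow> complex"
  assumes "inj f" "range f \<subseteq> U" "finite U"
  shows "(\<Sum>i\<in>UNIV. g (f i) * y i) = (\<Sum>u\<in>U. (if u \<in> range f then y (inv f u) else 0) * g u)"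
proof -
  have "(\<Sum>i\<in>UNIV. g (f i) * y i) = (\<Sum>u\<in>range f. y (inv f u) * g u)"
    by (simp add: sum.reindex[OF assms(1)] inv_f_f[OF assms(1)] mult.commute)
  also have "\<dots> = (\<Sum>u\<in>U. (if u \<in> range f then y (inv f u) * g u else 0))"
    using assms sum.inter_restrict[OF assms(3), of "\<lambda>u. y (inv f u) * g u" "range f"]
    by (simp add: Int_absorb1)
  also have "\<dots> = (\<Sum>u\<in>U. (if u \<in> range f then y (inv f u) else 0) * g u)"
    by (rule sum.cong) auto
  finally show ?thesis .
qed

lemma group_sum:
  fixes f f' :: "'m::finite \<Rightarrow> real" and g :: "real \<Rightarrow> complex"
  assumes "inj f" "inj f'"
  shows "(\<Sum>i\<in>UNIV. g (f i) * y1 i) - (\<Sum>j\<in>UNIV. g (f' j) * y2 j)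
       = (\<Sum>u\<in>range f \<union> range f'. aa f f' y1 y2 u * g u)"
  using group_one[OF assms(1), of "range f \<union> range f'" g y1] group_one[OF assms(2), of "range f \<union> range f'" g y2]
  by (simp add: aa_def sum_subtractf[symmetric] left_diff_distrib)

lemma key:
  fixes f f' :: "'m::finite \<Rightarrow> real" and z :: "real \<Rightarrow> complex"
  assumes inj: "inj f" "inj f'" and zi: "inj_on z (range f \<union> range f')" and nz: "\<And>u. z u \<noteq> 0"
    and rel: "\<And>n. n \<in> {1..N} \<Longrightarrow> (\<Sum>i\<in>UNIV. z (f i) ^ n * y1 i) = (\<Sum>j\<in>UNIV. z (f' j) ^ n * y2 j)"
    and E: "E \<subseteq> range f \<union> range f'" "card E \<le> N"
    and out: "\<And>u. u \<in> (range f \<union> range f') - E \<Longrightarrow> aa f f' y1 y2 u = 0"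
  shows "\<forall>u \<in> range f \<union> range f'. aa f f' y1 y2 u = 0"
proof -
  let ?U = "range f \<union> range f'"
  have fE: "finite E" by (rule finite_subset[OF E(1)]) simp
  have "\<forall>u\<in>E. aa f f' y1 y2 u = 0"
  proof (rule vandermonde_inj[OF fE E(2) inj_on_subset[OF zi E(1)] nz])
    fix n assume n: "n \<in> {1..N}"
    have "(\<Sum>u\<in>?U. aa f f' y1 y2 u * z u ^ n) = 0"
      using group_sum[OF inj, of "\<lambda>u. z u ^ n" y1 y2] rel[OF n] by simp
    moreover have "(\<Sum>u\<in>E. aa f f' y1 y2 u * z u ^ n) = (\<Sum>u\<in>?U. aa f f' y1 y2 u * z u ^ n)"
      by (rule sum.mono_neutral_left) (simp, rule E(1), metis out mult_eq_0_iff)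
    ultimately show "(\<Sum>u\<in>E. aa f f' y1 y2 u * z u ^ n) = 0" by simp
  qed
  then show ?thesis using out by (metis DiffI)
qed

theorem theorem1:
  fixes c fNyq B d theta :: real
    and N :: nat
    and f :: "'m::finite \<Rightarrow> real"
    and w :: "int \<Rightarrow> 'm \<Rightarrow> complex"
    and x :: "int \<Rightarrow> nat \<Rightarrow> complex"
  assumes c_pos: "c > 0" and fNyq_pos: "fNyq > 0" and B_pos: "B > 0"
    and theta: "0 \<le> theta" "theta \<le> pi" "theta \<noteq> pi / 2"
    and d_pos: "d > 0"
    and d_bound: "d < c / (\<bar>cos theta\<bar> * fNyq)"
    and f_range: "\<And>i. f i \<in> {- fNyq / 2 .. fNyq / 2}"
    and f_sep: "\<And>i j. i \<noteq> j \<Longrightarrow> \<bar>f i - f j\<bar> > B"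
    and meas: "\<And>k n. n \<in> {1..N} \<Longrightarrow> x k n = (\<Sum>i\<in>UNIV. steer c d theta f n i * w k i)"
    and c1: "int N > 2 * int CARD('m) - int (span_dim w)"
    and c2: "span_dim w \<ge> 1"
  shows "\<forall>f' :: 'm \<Rightarrow> real. \<forall>w' :: int \<Rightarrow> 'm \<Rightarrow> complex.
           ((\<forall>i. f' i \<in> {- fNyq / 2 .. fNyq / 2}) \<and> inj f'
            \<and> (\<forall>i. \<exists>k. w' k i \<noteq> 0)
            \<and> (\<forall>k. \<forall>n\<in>{1..N}. x k n = (\<Sum>i\<in>UNIV. steer c d theta f' n i * w' k i)))
           \<longrightarrow> (\<exists>\<sigma>. bij \<sigma> \<and> f' = f \<circ> \<sigma> \<and> (\<forall>k. w' k = w k \<circ> \<sigma>))"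
proof (intro allI impI)
  fix f' :: "'m \<Rightarrow> real" and w' :: "int \<Rightarrow> 'm \<Rightarrow> complex"
  assume H: "(\<forall>i. f' i \<in> {- fNyq / 2 .. fNyq / 2}) \<and> inj f'
            \<and> (\<forall>i. \<exists>k. w' k i \<noteq> 0)
            \<and> (\<forall>k. \<forall>n\<in>{1..N}. x k n = (\<Sum>i\<in>UNIV. steer c d theta f' n i * w' k i))"
  then have f'r: "\<And>i. f' i \<in> {- fNyq / 2 .. fNyq / 2}" and injf': "inj f'"
    and nzr: "\<And>i. \<exists>k. w' k i \<noteq> 0"
    and meas': "\<And>k n. n\<in>{1..N} \<Longrightarrow> x k n = (\<Sum>i\<in>UNIV. steer c d theta f' n i * w' k i)"
    by auto
  interpret cs: vector_space "cscale :: complex \<Rightarrow> ('m \<Rightarrow> complex) \<Rightarrow> _"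
    by (rule vector_space_cscale)
  define z where "z = zz c d theta"
  have cs0: "cos theta \<noteq> 0" using cos_nz theta by blast
  have injf: "inj f"
  proof (rule injI)
    fix i j assume "f i = f j"
    then show "i = j" using f_sep[of i j] B_pos by (cases "i = j") auto
  qed
  define U where "U = range f \<union> range f'"
  have finU: "finite U" by (simp add: U_def)
  have zi: "inj_on z U"
  proof (rule inj_onI)
    fix u v assume "u \<in> U" "v \<in> U" "z u = z v"
    moreover have "\<And>u. u \<in> U \<Longrightarrow> u \<in> {- fNyq / 2 .. fNyq / 2}"
      using f_range f'r by (auto simp: U_def)
    ultimately show "u = v"
      using zz_inj[OF c_pos fNyq_pos d_pos cs0 d_bound] by (auto simp: z_def)
  qed
  have nz: "\<And>u. z u \<noteq> 0" by (simp add: z_def zz_def)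
  have rel: "\<And>k n. n \<in> {1..N} \<Longrightarrow>
      (\<Sum>i\<in>UNIV. z (f i) ^ n * w k i) = (\<Sum>j\<in>UNIV. z (f' j) ^ n * w' k j)"
  proof -
    fix k n assume n: "n \<in> {1..N}"
    show "(\<Sum>i\<in>UNIV. z (f i) ^ n * w k i) = (\<Sum>j\<in>UNIV. z (f' j) ^ n * w' k j)"
      using meas[OF n, of k] meas'[OF n, of k] unfolding steer_eq z_def by (rule trans[OF sym])
  qed
  have cardF: "card (range f) = CARD('m)" using card_image[OF injf] by simp
  have cardF': "card (range f') = CARD('m)" using card_image[OF injf'] by simp
  define r where "r = span_dim w"
  obtain B where B: "B \<subseteq> range w" "cs.independent B" "range w \<subseteq> cs.span B" "card B = r"
    using cs.basis_exists[of "range w"] unfolding r_def span_dim_def by blast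
  have finB: "finite B" using B(4) c2 r_def card.infinite by fastforce
  define e where "e = (\<lambda>c::'m. \<lambda>x. if x = c then (1::complex) else 0)"
  have "B \<subseteq> cs.span (e ` UNIV)"
    using in_span_units[of UNIV] by (auto simp: e_def)
  then have "card B \<le> card (e ` (UNIV::'m set))"
    using cs.independent_span_bound[of "e ` UNIV" B] B(2) by simp
  also have "\<dots> \<le> CARD('m)" by (rule card_image_le) simp
  finally have rM: "r \<le> CARD('m)" using B(4) by simp
  have NM: "CARD('m) \<le> N" using c1 rM r_def by linarith
  have Ule: "card U \<le> N"
  proof (rule ccontr)
    assume "\<not> card U \<le> N"
    then have NU: "N < card U" by simp
    define D where "D = range f - range f'"
    have DU: "D \<subseteq> U" unfolding D_def U_def by blast
    have "D \<subseteq> range f" unfolding D_def by blast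
    moreover have "finite (range f)" by (rule finite_imageI) (rule finite_class.finite_UNIV)
    ultimately have "card D \<le> card (range f)" by (rule card_mono[rotated])
    then have cardD: "card D \<le> N" using cardF NM by linarith
    have "card (U - D) = card U - card D"
      by (rule card_Diff_subset[OF finite_subset[OF DU finU] DU])
    then have "N - card D \<le> card (U - D)" using NU by linarith
    then obtain T where T: "T \<subseteq> U - D" "card T = N - card D"
      by (rule obtain_subset_with_card_n)
    define E where "E = D \<union> T"
    have finD: "finite D" using DU finU finite_subset by blast
    have finT: "finite T" using T(1) finU finite_subset by blast
    have cardE: "card E = N"
      using card_Un_disjoint[OF finD finT] T cardD by (auto simp: E_def)
    have EU: "E \<subseteq> U" using DU T(1) by (auto simp: E_def)
    have DE: "D \<subseteq> E" by (auto simp: E_def)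
    define IP where "IP = {i. f i \<in> range f'}"
    define J where "J = {j. f' j \<notin> E}"
    define C' where "C' = IP \<times> {True} \<union> J \<times> {False}"
    have cardIP: "card IP = card (range f \<inter> range f')"
    proof -
      have "f ` IP = range f \<inter> range f'" by (auto simp: IP_def)
      then show ?thesis using card_image[OF inj_on_subset[OF injf, of IP]] by simp
    qed
    have UE: "U - E = range f' - E" using DE by (auto simp: U_def D_def)
    have cardJ: "card J = card (U - E)"
    proof -
      have "f' ` J = range f' - E" by (auto simp: J_def)
      then show ?thesis using card_image[OF inj_on_subset[OF injf', of J]] UE by simp
    qed
    have cUE: "card (U - E) = card U - N"
      using card_Diff_subset[OF finite_subset[OF EU finU] EU] cardE by simp
    have cUI: "card U + card (range f \<inter> range f') = CARD('m) + CARD('m)"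
      using card_Un_Int[of "range f" "range f'"] cardF cardF' by (simp add: U_def)
    have cardC: "card C' = card IP + card J"
    proof -
      have "card C' = card (IP \<times> {True}) + card (J \<times> {False})"
        unfolding C'_def by (rule card_Un_disjoint) auto
      then show ?thesis by (simp add: card_cartesian_product)
    qed
    have Cr: "card C' < r"
      using cardC cardIP cardJ cUE cUI NU c1 r_def by linarith
    obtain K where K: "inj_on w K" "B = w ` K"
      using subset_image_inj[of B w UNIV] B(1) by auto
    have finK: "finite K" using K finB finite_image_iff by blast
    have cardK: "card K = r" using K B(4) card_image by fastforce
    define e' where "e' = (\<lambda>c::'m \<times> bool. \<lambda>x. if x = c then (1::complex) else 0)"
    define g where "g k = (\<lambda>(i,b). if b then (if i \<in> IP then w k i else 0)
                                     else (if i \<in> J then w' k i else 0))" for k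
    interpret cs2: vector_space "cscale :: complex \<Rightarrow> ('m \<times> bool \<Rightarrow> complex) \<Rightarrow> _"
      by (rule vector_space_cscale)
    have gspan: "g ` K \<subseteq> cs2.span (e' ` C')"
    proof
      fix v assume "v \<in> g ` K"
      then obtain k where v: "v = g k" by auto
      have "\<And>p. p \<notin> C' \<Longrightarrow> v p = 0"
        subgoal for p by (cases p; cases "snd p") (auto simp: v g_def C'_def)
        done
      then show "v \<in> cs2.span (e' ` C')" using in_span_units[of C' v] by (simp add: e'_def)
    qed
    have finC: "finite C'" by simp
    obtain \<beta> where \<beta>: "\<exists>k\<in>K. \<beta> k \<noteq> 0" "(\<Sum>k\<in>K. cscale (\<beta> k) (g k)) = 0"
    proof (cases "inj_on g K")
      case True
      have "\<not> cs2.independent (g ` K)"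
      proof
        assume ind: "cs2.independent (g ` K)"
        have "card (g ` K) \<le> card (e' ` C')"
          using cs2.independent_span_bound[OF _ ind gspan] finC by simp
        also have "\<dots> \<le> card C'" by (rule card_image_le[OF finC])
        finally show False using card_image[OF True] cardK Cr by simp
      qed
      then have "\<exists>t u. finite t \<and> t \<subseteq> g ` K \<and> (\<Sum>v\<in>t. cscale (u v) v) = 0 \<and> (\<exists>v\<in>t. u v \<noteq> 0)"
        by (simp only: cs2.dependent_explicit not_not)
      then obtain t u where t: "finite t" "t \<subseteq> g ` K" "(\<Sum>v\<in>t. cscale (u v) v) = 0" "\<exists>v\<in>t. u v \<noteq> 0"
        by (elim exE conjE) blast
      define \<beta> where "\<beta> k = (if g k \<in> t then u (g k) else 0)" for k
      have "(\<Sum>k\<in>K. cscale (\<beta> k) (g k)) = (\<Sum>k\<in>K \<inter> g -` t. cscale (u (g k)) (g k))"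
        by (rule sum.mono_neutral_cong_right) (auto simp: finK \<beta>_def cscale_def)
      also have "\<dots> = (\<Sum>v\<in>g ` (K \<inter> g -` t). cscale (u v) v)"
        by (rule sum.reindex[symmetric, unfolded comp_def]) (rule inj_on_subset[OF True], auto)
      also have "g ` (K \<inter> g -` t) = t" using t(2) by auto
      finally have s0: "(\<Sum>k\<in>K. cscale (\<beta> k) (g k)) = 0" using t(3) by (simp add: zero_fun_def)
      obtain v where v: "v \<in> t" "u v \<noteq> 0" using t(4) by blast
      then obtain k where "k \<in> K" "v = g k" using t(2) by auto
      then have "\<exists>k\<in>K. \<beta> k \<noteq> 0" using v by (auto simp: \<beta>_def)
      then show ?thesis using that s0 by blast
    next
      case False
      then obtain k1 k2 where k: "k1 \<in> K" "k2 \<in> K" "k1 \<noteq> k2" "g k1 = g k2"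
        by (auto simp: inj_on_def)
      define \<beta> where "\<beta> k = (if k = k1 then 1 else if k = k2 then -1 else (0::complex))" for k
      have "(\<Sum>k\<in>K. cscale (\<beta> k) (g k)) = (\<Sum>k\<in>{k1,k2}. cscale (\<beta> k) (g k))"
        by (rule sum.mono_neutral_right) (auto simp: finK k \<beta>_def cscale_def)
      also have "\<dots> = 0" using k by (auto simp: \<beta>_def cscale_def)
      finally have s0: "(\<Sum>k\<in>K. cscale (\<beta> k) (g k)) = 0" .
      have "\<beta> k1 \<noteq> 0" by (simp add: \<beta>_def)
      then show ?thesis using that[of \<beta>] s0 k(1) by blast
    qed
    have g0: "\<And>p. (\<Sum>k\<in>K. \<beta> k * g k p) = 0"
      using fun_cong[OF \<beta>(2)] by (simp add: sum_fun_apply cscale_def)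
    define y1 where "y1 = (\<lambda>i. \<Sum>k\<in>K. \<beta> k * w k i)"
    define y2 where "y2 = (\<lambda>j. \<Sum>k\<in>K. \<beta> k * w' k j)"
    have y1IP: "\<And>i. i \<in> IP \<Longrightarrow> y1 i = 0"
    proof -
      fix i assume i: "i \<in> IP"
      show "y1 i = 0" using g0[of "(i, True)"] i by (simp add: y1_def g_def)
    qed
    have y2J: "\<And>j. j \<in> J \<Longrightarrow> y2 j = 0"
    proof -
      fix j assume j: "j \<in> J"
      show "y2 j = 0" using g0[of "(j, False)"] j by (simp add: y2_def g_def)
    qed
    have rel12: "\<And>n. n \<in> {1..N} \<Longrightarrow>
       (\<Sum>i\<in>UNIV. z (f i) ^ n * y1 i) = (\<Sum>j\<in>UNIV. z (f' j) ^ n * y2 j)"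
    proof -
      fix n assume n: "n \<in> {1..N}"
      have "(\<Sum>i\<in>UNIV. z (f i) ^ n * y1 i) = (\<Sum>i\<in>UNIV. \<Sum>k\<in>K. \<beta> k * (z (f i) ^ n * w k i))"
        unfolding y1_def by (simp add: sum_distrib_left mult_ac)
      also have "\<dots> = (\<Sum>k\<in>K. \<Sum>i\<in>UNIV. \<beta> k * (z (f i) ^ n * w k i))"
        by (rule sum.swap)
      also have "\<dots> = (\<Sum>k\<in>K. \<beta> k * (\<Sum>i\<in>UNIV. z (f i) ^ n * w k i))"
        by (simp add: sum_distrib_left)
      also have "\<dots> = (\<Sum>k\<in>K. \<beta> k * (\<Sum>j\<in>UNIV. z (f' j) ^ n * w' k j))"
        using rel[OF n] by simp
      also have "\<dots> = (\<Sum>k\<in>K. \<Sum>j\<in>UNIV. \<beta> k * (z (f' j) ^ n * w' k j))"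
        by (simp add: sum_distrib_left)
      also have "\<dots> = (\<Sum>j\<in>UNIV. \<Sum>k\<in>K. \<beta> k * (z (f' j) ^ n * w' k j))"
        by (rule sum.swap)
      also have "\<dots> = (\<Sum>j\<in>UNIV. z (f' j) ^ n * y2 j)"
        unfolding y2_def by (simp add: sum_distrib_left mult_ac)
      finally show "(\<Sum>i\<in>UNIV. z (f i) ^ n * y1 i) = (\<Sum>j\<in>UNIV. z (f' j) ^ n * y2 j)" .
    qed
    have out: "\<And>u. u \<in> (range f \<union> range f') - E \<Longrightarrow> aa f f' y1 y2 u = 0"
    proof -
      fix u assume u: "u \<in> (range f \<union> range f') - E"
      then have u': "u \<in> range f'" "u \<notin> E" using UE by (auto simp: U_def)
      have "inv f' u \<in> J" using u' by (auto simp: J_def f_inv_into_f)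
      moreover have "u \<in> range f \<Longrightarrow> inv f u \<in> IP" using u' by (auto simp: IP_def f_inv_into_f)
      ultimately show "aa f f' y1 y2 u = 0" using y1IP y2J by (auto simp: aa_def)
    qed
    have A0: "\<forall>u\<in>range f \<union> range f'. aa f f' y1 y2 u = 0"
      by (rule key[OF injf injf' zi[unfolded U_def] nz rel12 _ _ out]) (use EU cardE U_def in auto)
    have y10: "\<And>i. y1 i = 0"
    proof -
      fix i show "y1 i = 0"
      proof (cases "i \<in> IP")
        case True then show ?thesis by (rule y1IP)
      next
        case False
        then have "f i \<notin> range f'" by (simp add: IP_def)
        moreover have "aa f f' y1 y2 (f i) = 0" using A0 by blast
        ultimately show ?thesis by (simp add: aa_def inv_f_f[OF injf])
      qed
    qed
    define uu where "uu v = \<beta> (inv_into K w v)" for v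
    have "(\<Sum>v\<in>B. cscale (uu v) v) = (\<Sum>k\<in>K. cscale (\<beta> k) (w k))"
      unfolding K(2) by (simp add: sum.reindex[OF K(1)] uu_def inv_into_f_f[OF K(1)])
    also have "\<dots> = 0"
      using y10 by (auto simp: fun_eq_iff sum_fun_apply cscale_def y1_def)
    finally have sB: "(\<Sum>v\<in>B. cscale (uu v) v) = 0" .
    have "\<forall>v\<in>B. uu v = 0"
      using B(2)[unfolded cs.independent_explicit_finite_subsets, rule_format, OF subset_refl finB sB] by blast
    have "\<forall>k\<in>K. \<beta> k = 0"
    proof
      fix k assume k: "k \<in> K"
      then have "w k \<in> B" using K(2) by blast
      then have "uu (w k) = 0" using \<open>\<forall>v\<in>B. uu v = 0\<close> by blast
      then show "\<beta> k = 0" by (simp add: uu_def inv_into_f_f[OF K(1) k])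
    qed
    then show False using \<beta>(1) by blast
  qed
  have A: "\<And>k. \<forall>u\<in>U. aa f f' (w k) (w' k) u = 0"
    unfolding U_def
    by (rule key[OF injf injf' zi[unfolded U_def] nz rel, of _ "range f \<union> range f'"]) (use Ule U_def in auto)
  have sub: "range f' \<subseteq> range f"
  proof
    fix u assume u: "u \<in> range f'"
    then obtain j where j: "u = f' j" by auto
    show "u \<in> range f"
    proof (rule ccontr)
      assume nu: "u \<notin> range f"
      have "\<And>k. w' k j = 0"
      proof -
        fix k
        have "aa f f' (w k) (w' k) u = 0" using A[of k] u by (auto simp: U_def)
        then show "w' k j = 0" using nu u j by (simp add: aa_def inv_f_f[OF injf'])
      qed
      then show False using nzr[of j] by blast
    qed
  qed
  have eqF: "range f' = range f"
    by (rule card_subset_eq) (use sub cardF cardF' in auto)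
  define \<sigma> where "\<sigma> = inv f \<circ> f'"
  have fs: "f \<circ> \<sigma> = f'"
  proof
    fix j have "f' j \<in> range f" using eqF by auto
    then show "(f \<circ> \<sigma>) j = f' j" by (simp add: \<sigma>_def f_inv_into_f)
  qed
  have "inj \<sigma>" using injf' fs inj_on_imageI2[of f \<sigma> UNIV] by simp
  then have "bij \<sigma>" by (simp add: bij_def finite_UNIV_inj_surj)
  moreover have "\<forall>k. w' k = w k \<circ> \<sigma>"
  proof (intro allI ext)
    fix k j
    have "f' j \<in> range f" "f' j \<in> range f'" using eqF by auto
    moreover have "aa f f' (w k) (w' k) (f' j) = 0" using A[of k] by (auto simp: U_def)
    ultimately show "w' k j = (w k \<circ> \<sigma>) j"
      by (simp add: aa_def inv_f_f[OF injf'] \<sigma>_def)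
  qed
  ultimately show "\<exists>\<sigma>. bij \<sigma> \<and> f' = f \<circ> \<sigma> \<and> (\<forall>k. w' k = w k \<circ> \<sigma>)"
    using fs by blast
qed

end
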